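(* Let $K\subseteq\mathbb{R}^{n}$ be compact and let $T\subseteq\mathbb{R}^{n}$ be compact with non-empty interior. Then the set $\mathcal{C}$ of measures $\mu\in\mathcal{B}_{+}^{n}$ satisfying $\mu*\mathbbm{1}_{T}\ge\mathbbm{1}_{K}$ and $\int_{\mathbb{R}^{n}}d\mu=N^{*}(K,T)$ is non-empty and convex.
   Context: $\mathcal{B}_{+}^{n}$ is the set of non-negative regular Borel measures on $\mathbb{R}^n$; $(\mu*\mathbbm{1}_T)(x)=\int\mathbbm{1}_T(x-y)\,d\mu(y)$ with $\mathbbm{1}_T$ the indicator of $T$. $N^{*}(K,T)=\inf\{\mu(\mathbb{R}^n):\mu\in\mathcal{B}_+^n,\ \mu*\mathbbm{1}_T\ge\mathbbm{1}_K\}$. *)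

theory Defs
  imports "HOL-Analysis.Analysis"
begin

definition regular_borel_measure :: "'a::euclidean_space measure \<Rightarrow> bool" where
  "regular_borel_measure M \<longleftrightarrow> sets M = sets borel \<and>
     (\<forall>B \<in> sets borel.
        emeasure M B = (INF U \<in> {U. B \<subseteq> U \<and> open U}. emeasure M U) \<and>
        emeasure M B = (SUP C \<in> {C. C \<subseteq> B \<and> compact C}. emeasure M C))"

definition conv_ind :: "'a::euclidean_space measure \<Rightarrow> 'a set \<Rightarrow> 'a \<Rightarrow> ennreal" where
  "conv_ind \<mu> T x = (\<integral>\<^sup>+ y. indicator T (x - y) \<partial>\<mu>)"

definition covers :: "'a::euclidean_space measure \<Rightarrow> 'a set \<Rightarrow> 'a set \<Rightarrow> bool" where
  "covers \<mu> K T \<longleftrightarrow> (\<forall>x. conv_ind \<mu> T x \<ge> indicator K x)"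

definition N_star :: "'a::euclidean_space set \<Rightarrow> 'a set \<Rightarrow> ennreal" where
  "N_star K T = (INF \<mu> \<in> {\<mu>. regular_borel_measure \<mu> \<and> covers \<mu> K T}. emeasure \<mu> (space \<mu>))"

definition optimal_measures :: "'a::euclidean_space set \<Rightarrow> 'a set \<Rightarrow> 'a measure set" where
  "optimal_measures K T = {\<mu>. regular_borel_measure \<mu> \<and> covers \<mu> K T \<and>
      emeasure \<mu> (space \<mu>) = N_star K T}"

definition convex_comb_measure :: "real \<Rightarrow> 'a::euclidean_space measure \<Rightarrow> 'a measure \<Rightarrow> 'a measure" where
  "convex_comb_measure t \<mu> \<nu> = measure_of UNIV (sets borel)
      (\<lambda>A. ennreal t * emeasure \<mu> A + ennreal (1 - t) * emeasure \<nu> A)"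

end

theory Submission
  imports Defs "HOL-Probability.Probability"
begin



definition bitr :: "nat \<Rightarrow> real \<Rightarrow> real" where
  "bitr m t = of_int \<lfloor>2^(Suc m) * t\<rfloor> - 2 * of_int \<lfloor>2^m * t\<rfloor>"

lemma floor_double: "2 * \<lfloor>x::real\<rfloor> \<le> \<lfloor>2*x\<rfloor> \<and> \<lfloor>2*x\<rfloor> \<le> 2 * \<lfloor>x\<rfloor> + 1"
proof -
  have a: "of_int \<lfloor>x\<rfloor> \<le> x" "x < of_int \<lfloor>x\<rfloor> + 1" by linarith+
  have "2 * \<lfloor>x\<rfloor> \<le> \<lfloor>2*x\<rfloor>" using a by (intro le_floor_iff[THEN iffD2]) simp
  moreover have "\<lfloor>2*x\<rfloor> < 2 * \<lfloor>x\<rfloor> + 2" by (intro floor_less_iff[THEN iffD2]) (use a in linarith)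
  ultimately show ?thesis by simp
qed

lemma bitr_01: "bitr m t = 0 \<or> bitr m t = 1"
proof -
  have e: "2^(Suc m) * t = 2 * (2^m * t)" by simp
  show ?thesis using floor_double[of "2^m*t"] unfolding bitr_def e
    by (cases "\<lfloor>2 * (2 ^ m * t)\<rfloor> = 2 * \<lfloor>2 ^ m * t\<rfloor>") auto
qed

lemma bits_agree_floor:
  assumes "\<lfloor>t\<rfloor> = \<lfloor>t'\<rfloor>" "\<And>m. m < M \<Longrightarrow> bitr m t = bitr m t'"
  shows "\<lfloor>2^M * t\<rfloor> = \<lfloor>2^M * t'\<rfloor>"
  using assms(2)
proof (induction M)
  case 0 then show ?case using assms(1) by simp
next
  case (Suc M)
  then have h: "\<lfloor>2^M * t\<rfloor> = \<lfloor>2^M * t'\<rfloor>" by simp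
  have "bitr M t = bitr M t'" using Suc.prems by simp
  then have "real_of_int \<lfloor>2^(Suc M) * t\<rfloor> = of_int \<lfloor>2^(Suc M) * t'\<rfloor>"
    using h unfolding bitr_def by simp
  then show ?case by linarith
qed

lemma bits_agree_close:
  assumes "\<lfloor>t\<rfloor> = \<lfloor>t'\<rfloor>" "\<And>m. m < M \<Longrightarrow> bitr m t = bitr m t'"
  shows "\<bar>t - t'\<bar> < 1 / 2^M"
proof -
  have h: "\<lfloor>2^M * t\<rfloor> = \<lfloor>2^M * t'\<rfloor>" by (rule bits_agree_floor[OF assms])
  have "\<bar>2^M * t - 2^M * t'\<bar> < 1" using h by linarith
  then have "2^M * \<bar>t - t'\<bar> < 1" by (simp add: abs_mult right_diff_distrib[symmetric])
  then show ?thesis by (simp add: field_simps)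
qed

definition tern :: "(nat \<Rightarrow> real) \<Rightarrow> real" where
  "tern a = (\<Sum>j. 2 * a j / 3^(Suc j))"

lemma summable_geo3: "summable (\<lambda>j. 2 / (3::real)^(Suc j))"
proof -
  have "(\<lambda>j. 2 / (3::real)^(Suc j)) = (\<lambda>j. (2/3) * (1/3)^j)" by (simp add: power_one_over)
  then show ?thesis by (simp add: summable_geometric)
qed

lemma tern_summable:
  assumes "\<And>j. \<bar>a j\<bar> \<le> 1" shows "summable (\<lambda>j. 2 * a j / (3::real)^(Suc j))"
proof (rule summable_comparison_test[OF _ summable_geo3])
  show "\<exists>N. \<forall>n\<ge>N. norm (2 * a n / 3 ^ Suc n) \<le> 2 / 3 ^ Suc n"
    using assms by (auto simp: abs_mult divide_le_cancel)
qed




lemma suminf_geo3: "(\<Sum>j. 2 / (3::real)^(Suc j)) = 1"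
proof -
  have "(\<lambda>j. 2 / (3::real)^(Suc j)) = (\<lambda>j. (2/3) * (1/3)^j)" by (simp add: power_one_over)
  moreover have "(\<Sum>j. (2/3::real) * (1/3)^j) = 1"
    by (subst suminf_mult) (auto simp: suminf_geometric)
  ultimately show ?thesis by simp
qed

lemma ab01: "x \<in> {0,1} \<Longrightarrow> \<bar>x\<bar> \<le> (1::real)" by auto

lemma tern_bounds:
  assumes "\<And>j. a j \<in> {0,1}" shows "0 \<le> tern a" "tern a \<le> 1"
proof -
  have s: "summable (\<lambda>j. 2 * a j / (3::real)^(Suc j))"
    by (rule tern_summable, rule ab01, rule assms)
  show "0 \<le> tern a" unfolding tern_def
  proof (rule suminf_nonneg[OF s])
    fix n have "0 \<le> a n" using assms[of n] by auto
    then show "0 \<le> 2 * a n / 3^Suc n" by simp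
  qed
  have "tern a \<le> (\<Sum>j. 2 / (3::real)^(Suc j))" unfolding tern_def
  proof (rule suminf_le[OF _ s summable_geo3])
    fix n have "a n \<le> 1" using assms[of n] by auto
    then show "2 * a n / 3^Suc n \<le> 2 / (3::real)^Suc n" by (simp add: divide_right_mono)
  qed
  then show "tern a \<le> 1" using suminf_geo3 by simp
qed

lemma tern_gap:
  assumes a: "\<And>j. a j \<in> {0,1}" and b: "\<And>j. b j \<in> {0,1}"
    and eq: "\<And>j. j < J \<Longrightarrow> a j = b j" and ne: "a J \<noteq> b J"
  shows "1 / 3^(Suc J) \<le> \<bar>tern a - tern b\<bar>"
proof -
  define f where "f j = 2 * (a j - b j) / (3::real)^(Suc j)" for j
  have sa: "summable (\<lambda>j. 2 * a j / (3::real)^(Suc j))" by (rule tern_summable, rule ab01, rule a)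
  have sb: "summable (\<lambda>j. 2 * b j / (3::real)^(Suc j))" by (rule tern_summable, rule ab01, rule b)
  have D: "tern a - tern b = suminf f" unfolding tern_def f_def
    by (subst suminf_diff[OF sa sb]) (simp add: diff_divide_distrib right_diff_distrib)
  have "(\<lambda>j. 2*a j/3^Suc j - 2*b j/3^Suc j) = f" by (auto simp: f_def field_simps)
  then have sf: "summable f" using summable_diff[OF sa sb] by simp
  have split: "suminf f = (\<Sum>n. f (n + Suc J)) + (\<Sum>i<Suc J. f i)"
    by (rule suminf_split_initial_segment[OF sf])
  have init: "(\<Sum>i<Suc J. f i) = f J"
    by (simp add: f_def eq)
  have fJ: "\<bar>f J\<bar> = 2 / 3^(Suc J)" using a[of J] b[of J] ne by (auto simp: f_def)
  define h where "h n = (1 / 3^(Suc J)) * (2 / (3::real)^(Suc n))" for n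
  have sh: "summable h" unfolding h_def by (rule summable_mult[OF summable_geo3])
  have suh: "suminf h = 1 / 3^(Suc J)" unfolding h_def by (subst suminf_mult[OF summable_geo3]) (use suminf_geo3 in simp)
  have sft: "summable (\<lambda>n. f (n + Suc J))" using summable_ignore_initial_segment[OF sf, of "Suc J"] by simp
  have bnd: "\<bar>f (n + Suc J)\<bar> \<le> h n" for n
  proof -
    have "\<bar>a (n + Suc J) - b (n + Suc J)\<bar> \<le> 1" using a[of "n + Suc J"] b[of "n + Suc J"] by auto
    then have "\<bar>f (n + Suc J)\<bar> \<le> 2 / 3^(Suc (n + Suc J))"
      by (simp add: f_def abs_mult divide_right_mono)
    also have "\<dots> = h n" by (simp add: h_def power_add)
    finally show ?thesis .
  qed
  have t1: "(\<Sum>n. f (n + Suc J)) \<le> suminf h"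
    by (rule suminf_le[OF _ sft sh]) (use bnd in \<open>simp add: abs_le_iff\<close>)
  have t2: "- suminf h \<le> (\<Sum>n. f (n + Suc J))"
  proof -
    have "(\<Sum>n. - h n) \<le> (\<Sum>n. f (n + Suc J))"
      by (rule suminf_le[OF _ summable_minus[OF sh] sft]) (metis abs_le_iff bnd minus_le_iff)
    then show ?thesis by (simp add: suminf_minus[OF sh])
  qed
  show ?thesis using D split init fJ t1 t2 suh by (simp add: abs_if split: if_splits) linarith?
qed




lemma tern_agree:
  assumes a: "\<And>j. a j \<in> {0,1}" and b: "\<And>j. b j \<in> {0,1}"
    and lt: "\<bar>tern a - tern b\<bar> < 1 / 3^(Suc J)" and "j \<le> J"
  shows "a j = b j"
proof (rule ccontr)
  assume "a j \<noteq> b j"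
  define j0 where "j0 = (LEAST i. a i \<noteq> b i)"
  have j0: "a j0 \<noteq> b j0" unfolding j0_def by (rule LeastI) fact
  have "j0 \<le> j" unfolding j0_def by (rule Least_le) fact
  have eq: "i < j0 \<Longrightarrow> a i = b i" for i unfolding j0_def using not_less_Least by blast
  have "1 / 3^(Suc j0) \<le> \<bar>tern a - tern b\<bar>" by (rule tern_gap[where a=a and b=b and J=j0, OF a b eq j0])
  moreover have "1 / (3::real)^(Suc J) \<le> 1 / 3^(Suc j0)"
    using \<open>j0 \<le> j\<close> \<open>j \<le> J\<close> by (intro divide_left_mono power_increasing) auto
  ultimately show False using lt by linarith
qed

definition cc :: "real \<Rightarrow> 'a::euclidean_space \<Rightarrow> 'a \<Rightarrow> real" where
  "cc R b y = (y \<bullet> b + R) / (2*R)"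

definition dig :: "'a::euclidean_space list \<Rightarrow> real \<Rightarrow> 'a \<Rightarrow> nat \<Rightarrow> real" where
  "dig bs R y j = bitr (j div length bs) (cc R (bs ! (j mod length bs)) y)"

definition code :: "'a::euclidean_space list \<Rightarrow> real \<Rightarrow> 'a \<Rightarrow> real" where
  "code bs R y = tern (dig bs R y)"

lemma dig_01: "dig bs R y j \<in> {0,1}"
  using bitr_01 unfolding dig_def by auto

lemma code_bounds: "0 \<le> code bs R y" "code bs R y \<le> 1"
  unfolding code_def by (rule tern_bounds, rule dig_01)+

lemma code_measurable: "code bs R \<in> borel_measurable borel"
  unfolding code_def tern_def dig_def bitr_def cc_def
  by measurable

lemma code_close:
  fixes y y' :: "'a::euclidean_space"
  assumes bs: "distinct bs" "set bs = Basis" and R: "R > 0"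
    and y: "\<And>b. b \<in> Basis \<Longrightarrow> \<bar>y \<bullet> b\<bar> < R" and y': "\<And>b. b \<in> Basis \<Longrightarrow> \<bar>y' \<bullet> b\<bar> < R"
    and lt: "\<bar>code bs R y - code bs R y'\<bar> < 1 / 3^(Suc (length bs * M))"
  shows "norm (y - y') < real (length bs) * (2 * R / 2^M)"
proof -
  define d where "d = length bs"
  have d: "card (Basis::'a set) = d" unfolding d_def using bs distinct_card by metis
  have dpos: "d > 0" using d by (metis card_gt_0_iff finite_Basis nonempty_Basis)
  have coord: "\<bar>(y - y') \<bullet> b\<bar> < 2 * R / 2^M" if b: "b \<in> Basis" for b
  proof -
    obtain i where i: "i < d" "b = bs ! i" using b bs(2) unfolding d_def by (metis in_set_conv_nth)
    have ag: "bitr m (cc R b y) = bitr m (cc R b y')" if "m < M" for m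
    proof -
      define j where "j = m * d + i"
      have jdiv: "j div d = m" "j mod d = i" unfolding j_def using i dpos by auto
      have "j \<le> d * M"
      proof -
        have "m * d + i < m * d + d" using i by simp
        also have "\<dots> = (m+1) * d" by simp
        also have "\<dots> \<le> M * d" using that by (intro mult_right_mono) auto
        finally show ?thesis unfolding j_def by (simp add: mult.commute)
      qed
      then have "dig bs R y j = dig bs R y' j"
        using tern_agree[where a="dig bs R y" and b="dig bs R y'" and J="d*M" and j=j, OF dig_01 dig_01] lt unfolding code_def d_def by blast
      then show ?thesis unfolding dig_def d_def[symmetric] jdiv i(2) .
    qed
    have c01: "0 < cc R b z \<and> cc R b z < 1" if "\<bar>z \<bullet> b\<bar> < R" for z
      using that R unfolding cc_def by (auto simp: field_simps abs_less_iff)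
    have "\<lfloor>cc R b y\<rfloor> = 0" using c01[OF y[OF b]] by (simp add: floor_eq_iff)
    moreover have "\<lfloor>cc R b y'\<rfloor> = 0" using c01[OF y'[OF b]] by (simp add: floor_eq_iff)
    ultimately have fl: "\<lfloor>cc R b y\<rfloor> = \<lfloor>cc R b y'\<rfloor>" by simp
    have "\<bar>cc R b y - cc R b y'\<bar> < 1 / 2^M" by (rule bits_agree_close[OF fl ag])
    moreover have "cc R b y - cc R b y' = ((y - y') \<bullet> b) / (2*R)"
      unfolding cc_def using R by (simp add: inner_diff_left field_simps)
    ultimately have "\<bar>(y - y') \<bullet> b\<bar> / (2*R) < 1 / 2^M" using R by (simp add: abs_div)
    then show ?thesis using R by (simp add: field_simps)
  qed
  have "norm (y - y') \<le> (\<Sum>b\<in>Basis. \<bar>(y - y') \<bullet> b\<bar>)" by (rule norm_le_l1)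
  also have "\<dots> < (\<Sum>b\<in>(Basis::'a set). 2 * R / 2^M)"
    by (rule sum_strict_mono) (auto intro: coord)
  also have "\<dots> = real d * (2 * R / 2^M)" using d by simp
  finally show ?thesis unfolding d_def .
qed




lemma exM: assumes "e > 0" shows "\<exists>M. c / 2^M < (e::real)"
proof -
  obtain M where "c / e < 2^M" using real_arch_pow[of 2 "c/e"] by auto
  then have "c < e * 2^M" using assms by (simp add: field_simps)
  then show ?thesis by (intro exI[of _ M]) (simp add: field_simps)
qed

definition boxR :: "real \<Rightarrow> 'a::euclidean_space set" where
  "boxR R = {y. \<forall>b\<in>Basis. \<bar>y \<bullet> b\<bar> < R}"

lemma code_uc_delta:
  fixes bs :: "'a::euclidean_space list"
  assumes bs: "distinct bs" "set bs = Basis" and R: "R > 0" and e: "e > 0"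
  shows "\<exists>\<delta>>0. \<forall>y\<in>boxR R. \<forall>y'\<in>boxR R. \<bar>code bs R y - code bs R y'\<bar> < \<delta> \<longrightarrow> norm (y - y') < e"
proof -
  obtain M where M: "real (length bs) * (2 * R) / 2^M < e" using exM[OF e] by blast
  show ?thesis
  proof (intro exI[of _ "1 / 3^(Suc (length bs * M))"] conjI ballI impI)
    fix y y' :: 'a assume y: "y \<in> boxR R" "y' \<in> boxR R"
      and lt: "\<bar>code bs R y - code bs R y'\<bar> < 1 / 3 ^ Suc (length bs * M)"
    have "norm (y - y') < real (length bs) * (2 * R / 2^M)"
      by (rule code_close[OF bs R _ _ lt]) (use y in \<open>auto simp: boxR_def\<close>)
    then show "norm (y - y') < e" using M by simp
  qed simp
qed

lemma code_inj:
  fixes bs :: "'a::euclidean_space list"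
  assumes bs: "distinct bs" "set bs = Basis" and R: "R > 0"
  shows "inj_on (code bs R) (boxR R)"
proof (rule inj_onI, rule ccontr)
  fix y y' assume y: "y \<in> boxR R" "y' \<in> boxR R" and eq: "code bs R y = code bs R y'" and ne: "y \<noteq> y'"
  have "norm (y - y') > 0" using ne by simp
  from code_uc_delta[OF bs R this] obtain \<delta> where "\<delta> > 0" "\<forall>u\<in>boxR R. \<forall>v\<in>boxR R. \<bar>code bs R u - code bs R v\<bar> < \<delta> \<longrightarrow> norm (u - v) < norm (y - y')"
    by blast
  moreover have "\<bar>code bs R y - code bs R y'\<bar> < \<delta>" using eq \<open>\<delta> > 0\<close> by simp
  ultimately have "norm (y - y') < norm (y - y')" using y by blast
  then show False by simp
qed

lemma code_uc:
  fixes bs :: "'a::euclidean_space list"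
  assumes bs: "distinct bs" "set bs = Basis" and R: "R > 0" and A: "A \<subseteq> boxR R"
  shows "uniformly_continuous_on (code bs R ` A) (inv_into A (code bs R))"
  unfolding uniformly_continuous_on_def
proof (intro allI impI)
  fix e :: real assume e: "e > 0"
  obtain \<delta> where d: "\<delta> > 0" "\<forall>y\<in>boxR R. \<forall>y'\<in>boxR R. \<bar>code bs R y - code bs R y'\<bar> < \<delta> \<longrightarrow> norm (y - y') < e"
    using code_uc_delta[OF bs R e] by auto
  have inj: "inj_on (code bs R) A" using code_inj[OF bs R] A inj_on_subset by blast
  show "\<exists>d>0. \<forall>x\<in>code bs R ` A. \<forall>x'\<in>code bs R ` A. dist x' x < d \<longrightarrow>
          dist (inv_into A (code bs R) x') (inv_into A (code bs R) x) < e"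
  proof (intro exI[of _ \<delta>] conjI ballI impI d(1))
    fix z z' assume z: "z \<in> code bs R ` A" and z': "z' \<in> code bs R ` A" and dz: "dist z' z < \<delta>"
    obtain y where y: "y \<in> A" "z = code bs R y" using z by auto
    obtain y' where y': "y' \<in> A" "z' = code bs R y'" using z' by auto
    have "inv_into A (code bs R) z = y" "inv_into A (code bs R) z' = y'"
      using y y' inj by (auto intro: inv_into_f_f)
    moreover have "norm (y' - y) < e" using d(2) y y' A dz by (auto simp: dist_real_def)
    ultimately show "dist (inv_into A (code bs R) z') (inv_into A (code bs R) z) < e"
      by (simp add: dist_norm)
  qed
qed




lemma closed_limit:
  fixes P :: "nat \<Rightarrow> real measure" and \<rho> :: "real measure"
  assumes P: "\<And>k. real_distribution (P k)" and \<rho>: "real_distribution \<rho>"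
    and wc: "weak_conv_m P \<rho>" and F: "closed F"
    and c: "c \<longlonglongrightarrow> c0" and ineq: "\<And>k. c k \<le> measure (P k) F"
  shows "c0 \<le> measure \<rho> F"
proof (cases "F = {}")
  case True
  then have "c k \<le> 0" for k using ineq[of k] by simp
  then have "c0 \<le> 0" using c by (intro LIMSEQ_le_const2[OF c]) auto
  then show ?thesis using True by simp
next
  case ne: False
  interpret \<rho>: real_distribution \<rho> by fact
  define f where "f j z = max 0 (1 - real j * infdist z F)" for j z
  have fcont: "isCont (f j) z" for j z unfolding f_def by (intro continuous_intros)
  have fb: "norm (f j z) \<le> 1" for j z
    unfolding f_def using infdist_nonneg[of z F] by (auto simp: mult_nonneg_nonneg)
  have fmeas[measurable]: "f j \<in> borel_measurable borel" for j
    by (rule borel_measurable_continuous_onI) (simp add: continuous_at_imp_continuous_on fcont)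
  have find: "indicator F z \<le> f j z" for j z
    unfolding f_def by (auto simp: indicator_def)
  have step: "c0 \<le> (\<integral>z. f j z \<partial>\<rho>)" for j
  proof -
    have lim: "(\<lambda>k. \<integral>z. f j z \<partial>P k) \<longlonglongrightarrow> (\<integral>z. f j z \<partial>\<rho>)"
      by (rule weak_conv_imp_integral_bdd_continuous_conv[OF P \<rho> wc fcont fb])
    have "c k \<le> (\<integral>z. f j z \<partial>P k)" for k
    proof -
      interpret Pk: real_distribution "P k" by (rule P)
      have "measure (P k) F = (\<integral>z. indicator F z \<partial>P k)" by simp
      also have "\<dots> \<le> (\<integral>z. f j z \<partial>P k)"
      proof (rule integral_mono)
        show "integrable (P k) (f j)"
        proof (rule Pk.integrable_const_bound[where B=1])
          show "AE x in P k. norm (f j x) \<le> 1" using fb by simp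
          show "f j \<in> borel_measurable (P k)" by simp
        qed
      qed (auto intro: find intro!: integrable_real_indicator simp: F borel_closed Pk.emeasure_finite less_top[symmetric])
      finally show ?thesis using ineq[of k] by linarith
    qed
    then show ?thesis by (intro LIMSEQ_le[OF c lim]) auto
  qed
  have conv: "(\<lambda>j. \<integral>z. f j z \<partial>\<rho>) \<longlonglongrightarrow> (\<integral>z. indicator F z \<partial>\<rho>)"
  proof (rule integral_dominated_convergence[where w="\<lambda>_. 1"])
    show "(indicator F :: real \<Rightarrow> real) \<in> borel_measurable \<rho>" using F by (auto simp: borel_closed borel_measurable_indicator)
    show "f j \<in> borel_measurable \<rho>" for j by simp
    show "integrable \<rho> (\<lambda>_. 1::real)" by simp
    show "AE z in \<rho>. norm (f j z) \<le> 1" for j using fb by simp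
    show "AE z in \<rho>. (\<lambda>j. f j z) \<longlonglongrightarrow> indicator F z"
    proof (rule AE_I2)
      fix z show "(\<lambda>j. f j z) \<longlonglongrightarrow> indicator F z"
      proof (cases "z \<in> F")
        case True then show ?thesis by (simp add: f_def)
      next
        case False
        then have pos: "infdist z F > 0" using infdist_pos_not_in_closed[OF F ne] by blast
        obtain N :: nat where N: "1 / infdist z F < N" using reals_Archimedean2 by blast
        have "eventually (\<lambda>j. f j z = 0) sequentially"
        proof (rule eventually_sequentiallyI[of N])
          fix j assume "N \<le> j"
          then have "1 < real j * infdist z F" using N pos by (simp add: field_simps) (smt (verit) mult_right_mono of_nat_le_iff)
          then show "f j z = 0" by (simp add: f_def)
        qed
        then show ?thesis using False by (simp add: tendsto_eventually)
      qed
    qed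
  qed
  have "(\<integral>z. indicator F z \<partial>\<rho>) = measure \<rho> F" by simp
  moreover have "c0 \<le> (\<integral>z. indicator F z \<partial>\<rho>)"
    by (rule LIMSEQ_le_const[OF conv]) (use step in auto)
  ultimately show ?thesis by simp
qed




lemma REG:
  fixes M :: "'a::euclidean_space measure"
  assumes "sets M = sets borel" "emeasure M (space M) \<noteq> \<infinity>"
  shows "regular_borel_measure M"
  unfolding regular_borel_measure_def
  using assms inner_regular[OF assms] outer_regular[OF assms] by auto

lemma mass_ge1:
  fixes \<mu> :: "'a::euclidean_space measure"
  assumes "covers \<mu> K T" "x \<in> K"
  shows "1 \<le> emeasure \<mu> (space \<mu>)"
proof -
  have "1 \<le> conv_ind \<mu> T x" using assms unfolding covers_def by (metis indicator_simps(1))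
  also have "\<dots> \<le> (\<integral>\<^sup>+ y. 1 \<partial>\<mu>)" unfolding conv_ind_def
    by (intro nn_integral_mono) (auto simp: indicator_def)
  also have "\<dots> = emeasure \<mu> (space \<mu>)" by simp
  finally show ?thesis .
qed

lemma N_star_le:
  "regular_borel_measure \<mu> \<Longrightarrow> covers \<mu> K T \<Longrightarrow> N_star K T \<le> emeasure \<mu> (space \<mu>)"
  unfolding N_star_def by (rule INF_lower) auto

lemma N_star_ge1:
  fixes K T :: "'a::euclidean_space set"
  assumes "K \<noteq> {}" shows "1 \<le> N_star K T"
proof -
  obtain x where "x \<in> K" using assms by auto
  then show ?thesis unfolding N_star_def by (auto intro!: INF_greatest intro: mass_ge1)
qed

lemma ind_meas:
  fixes T :: "'a::euclidean_space set"
  assumes "closed T" shows "(\<lambda>y. indicator T (x - y) :: ennreal) \<in> borel_measurable borel"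
proof -
  have [measurable]: "T \<in> sets borel" using assms by (rule borel_closed)
  show ?thesis by measurable
qed

lemma finite_cover_exists:
  fixes K T :: "'a::euclidean_space set"
  assumes K: "compact K" and T: "interior T \<noteq> {}" and Tc: "closed T"
  shows "\<exists>\<mu>. regular_borel_measure \<mu> \<and> covers \<mu> K T \<and> emeasure \<mu> (space \<mu>) < \<infinity>"
proof -
  obtain t0 where t0: "t0 \<in> interior T" using T by auto
  obtain r where r: "r > 0" "ball t0 r \<subseteq> T" using t0 by (meson open_contains_ball open_interior interior_subset subset_trans)
  have "K \<subseteq> (\<Union>c\<in>K. ball c r)" using r by auto
  then obtain C where C: "C \<subseteq> K" "finite C" "K \<subseteq> (\<Union>c\<in>C. ball c r)"
    using compactE_image[OF K, of K "\<lambda>c. ball c r"] by blast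
  define P where "P = (\<lambda>c. c - t0) ` C"
  have fP: "finite P" using C by (simp add: P_def)
  define \<mu> where "\<mu> = distr (count_space P) borel (\<lambda>y. y)"
  have meas: "(\<lambda>y. y) \<in> measurable (count_space P) borel" by simp
  have sets: "sets \<mu> = sets borel" by (simp add: \<mu>_def)
  have sp: "space \<mu> = UNIV" by (simp add: \<mu>_def)
  have mass: "emeasure \<mu> (space \<mu>) = of_nat (card P)"
    by (simp add: \<mu>_def emeasure_distr[OF meas] sp fP emeasure_count_space)
  have cov: "covers \<mu> K T"
    unfolding covers_def
  proof
    fix x show "indicator K x \<le> conv_ind \<mu> T x"
    proof (cases "x \<in> K")
      case False then show ?thesis by simp
    next
      case True
      then obtain c where c: "c \<in> C" "x \<in> ball c r" using C by auto
      have "x - (c - t0) \<in> T" using c r by (intro subsetD[OF r(2)]) (auto simp: dist_norm algebra_simps norm_minus_commute)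
      then have cP: "c - t0 \<in> P" "indicator T (x - (c - t0)) = (1::ennreal)" using c by (auto simp: P_def)
      have "conv_ind \<mu> T x = (\<Sum>y\<in>P. indicator T (x - y))"
        unfolding conv_ind_def \<mu>_def using fP
        by (subst nn_integral_distr[OF meas]) (auto simp: nn_integral_count_space_finite ind_meas[OF Tc])
      also have "\<dots> \<ge> indicator T (x - (c - t0))"
        by (rule member_le_sum[OF cP(1)]) (auto simp: fP)
      finally show ?thesis using cP True by simp
    qed
  qed
  have "regular_borel_measure \<mu>" by (rule REG[OF sets]) (simp add: mass)
  then show ?thesis using cov mass by (intro exI[of _ \<mu>]) (simp add: of_nat_less_top)
qed




lemma cc_sets:
  "sets (convex_comb_measure t \<mu> \<nu>) = sets (borel :: 'a::euclidean_space measure)"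
  unfolding convex_comb_measure_def
  by (metis sets.sigma_sets_eq sets_measure_of sets.space_closed space_borel)

lemma cc_space: "space (convex_comb_measure t \<mu> \<nu>) = (UNIV :: 'a::euclidean_space set)"
  using cc_sets sets_eq_imp_space_eq by (metis space_borel)

lemma cc_emeasure:
  fixes \<mu> \<nu> :: "'a::euclidean_space measure"
  assumes s: "sets \<mu> = sets borel" "sets \<nu> = sets borel" and A: "A \<in> sets borel"
  shows "emeasure (convex_comb_measure t \<mu> \<nu>) A = ennreal t * emeasure \<mu> A + ennreal (1 - t) * emeasure \<nu> A"
  unfolding convex_comb_measure_def
proof (rule emeasure_measure_of_sigma)
  show "sigma_algebra UNIV (sets borel)" by (metis sets.sigma_algebra_axioms space_borel)
  show "positive (sets borel) (\<lambda>A. ennreal t * emeasure \<mu> A + ennreal (1 - t) * emeasure \<nu> A)"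
    by (simp add: positive_def)
  show "countably_additive (sets borel) (\<lambda>A. ennreal t * emeasure \<mu> A + ennreal (1 - t) * emeasure \<nu> A)"
  proof (rule countably_additiveI)
    fix A :: "nat \<Rightarrow> 'a set" assume *: "range A \<subseteq> sets borel" "disjoint_family A"
    have m: "(\<Sum>i. emeasure \<mu> (A i)) = emeasure \<mu> (\<Union>i. A i)" "(\<Sum>i. emeasure \<nu> (A i)) = emeasure \<nu> (\<Union>i. A i)"
      using * s by (auto intro!: suminf_emeasure)
    have "(\<Sum>i. ennreal t * emeasure \<mu> (A i) + ennreal (1 - t) * emeasure \<nu> (A i)) =
          (\<Sum>i. ennreal t * emeasure \<mu> (A i)) + (\<Sum>i. ennreal (1 - t) * emeasure \<nu> (A i))"
      by (intro suminf_add[symmetric] summableI)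
    also have "\<dots> = ennreal t * emeasure \<mu> (\<Union>i. A i) + ennreal (1 - t) * emeasure \<nu> (\<Union>i. A i)"
      by (simp add: ennreal_suminf_cmult m)
    finally show "(\<Sum>i. ennreal t * emeasure \<mu> (A i) + ennreal (1 - t) * emeasure \<nu> (A i)) =
          ennreal t * emeasure \<mu> (\<Union>i. A i) + ennreal (1 - t) * emeasure \<nu> (\<Union>i. A i)" .
  qed
qed fact

lemma cc_nn_integral:
  fixes \<mu> \<nu> :: "'a::euclidean_space measure"
  assumes s: "sets \<mu> = sets borel" "sets \<nu> = sets borel" and f: "f \<in> borel_measurable borel"
  shows "nn_integral (convex_comb_measure t \<mu> \<nu>) f = ennreal t * nn_integral \<mu> f + ennreal (1 - t) * nn_integral \<nu> f"
proof -
  have mb: "g \<in> borel_measurable \<mu> \<and> g \<in> borel_measurable \<nu> \<and> g \<in> borel_measurable (convex_comb_measure t \<mu> \<nu>)"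
    if "g \<in> borel_measurable borel" for g :: "'a \<Rightarrow> ennreal"
    using that measurable_cong_sets[OF s(1) refl] measurable_cong_sets[OF s(2) refl]
      measurable_cong_sets[OF cc_sets[of t \<mu> \<nu>] refl] by blast
  show ?thesis using f
proof induction
  case (cong f g)
  have "f = g" using cong(3) by (intro ext) simp
  then show ?case using cong(4) by simp
next
  case (set A)
  then show ?case
    using cc_emeasure[OF s set] s
    by (simp add: cc_sets nn_integral_indicator)
next
  case (mult f c)
  have m\<mu>: "f \<in> borel_measurable \<mu>" "f \<in> borel_measurable \<nu>" "f \<in> borel_measurable (convex_comb_measure t \<mu> \<nu>)"
    using mb[OF mult(2)] by auto
  show ?case using mult(4)
    by (simp add: nn_integral_cmult m\<mu> distrib_left mult.left_commute)
next
  case (add f g)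
  from add have fm: "f \<in> borel_measurable borel" "g \<in> borel_measurable borel" by auto
  from add have IH: "nn_integral (convex_comb_measure t \<mu> \<nu>) f = ennreal t * nn_integral \<mu> f + ennreal (1 - t) * nn_integral \<nu> f"
    "nn_integral (convex_comb_measure t \<mu> \<nu>) g = ennreal t * nn_integral \<mu> g + ennreal (1 - t) * nn_integral \<nu> g" by auto
  have m: "f \<in> borel_measurable \<mu>" "f \<in> borel_measurable \<nu>" "f \<in> borel_measurable (convex_comb_measure t \<mu> \<nu>)"
    "g \<in> borel_measurable \<mu>" "g \<in> borel_measurable \<nu>" "g \<in> borel_measurable (convex_comb_measure t \<mu> \<nu>)"
    using mb[OF fm(1)] mb[OF fm(2)] by auto
  show ?case using IH
    by (simp add: nn_integral_add m distrib_left algebra_simps)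
next
  case (seq U)
  have incU: "incseq U" using seq by blast
  have Um: "U i \<in> borel_measurable borel" for i using seq by blast
  have IHU: "nn_integral (convex_comb_measure t \<mu> \<nu>) (U i) = ennreal t * nn_integral \<mu> (U i) + ennreal (1 - t) * nn_integral \<nu> (U i)" for i
    using seq by blast
  have supeq: "Sup (range U) = (\<lambda>x. SUP i. U i x)" by (rule ext) (simp add: image_comp)
  have m: "U i \<in> borel_measurable \<mu>" "U i \<in> borel_measurable \<nu>" "U i \<in> borel_measurable (convex_comb_measure t \<mu> \<nu>)" for i
    using mb[OF Um] by auto
  have inc: "incseq (\<lambda>i. nn_integral \<mu> (U i))" "incseq (\<lambda>i. nn_integral \<nu> (U i))"
    using incU by (auto intro!: incseq_nn_integral)
  have "nn_integral (convex_comb_measure t \<mu> \<nu>) (Sup (range U)) = (SUP i. nn_integral (convex_comb_measure t \<mu> \<nu>) (U i))"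
    unfolding supeq by (rule nn_integral_monotone_convergence_SUP[OF incU m(3)])
  also have "\<dots> = (SUP i. ennreal t * nn_integral \<mu> (U i) + ennreal (1 - t) * nn_integral \<nu> (U i))"
    using IHU by simp
  also have "\<dots> = (SUP i. ennreal t * nn_integral \<mu> (U i)) + (SUP i. ennreal (1 - t) * nn_integral \<nu> (U i))"
    by (rule ennreal_SUP_add) (use inc in \<open>auto simp: incseq_def intro: mult_left_mono\<close>)
  also have "\<dots> = ennreal t * (SUP i. nn_integral \<mu> (U i)) + ennreal (1 - t) * (SUP i. nn_integral \<nu> (U i))"
    by (simp add: SUP_mult_left_ennreal)
  also have "\<dots> = ennreal t * nn_integral \<mu> (Sup (range U)) + ennreal (1 - t) * nn_integral \<nu> (Sup (range U))"
    unfolding supeq by (simp add: nn_integral_monotone_convergence_SUP[OF incU m(1)] nn_integral_monotone_convergence_SUP[OF incU m(2)])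
  finally show ?case .
qed
qed




lemma ennreal_cc: "0 \<le> t \<Longrightarrow> t \<le> 1 \<Longrightarrow> ennreal t * a + ennreal (1 - t) * a = a"
proof -
  assume "0 \<le> t" "t \<le> 1"
  then have "ennreal t + ennreal (1 - t) = ennreal (t + (1 - t))" by (intro ennreal_plus[symmetric]) auto
  then have "ennreal t + ennreal (1 - t) = 1" by simp
  then show ?thesis by (metis distrib_right mult_1)
qed

lemma N_star_finite:
  fixes K T :: "'a::euclidean_space set"
  assumes "compact K" "closed T" "interior T \<noteq> {}"
  shows "N_star K T < \<infinity>"
proof -
  obtain \<mu> where "regular_borel_measure \<mu>" "covers \<mu> K T" "emeasure \<mu> (space \<mu>) < \<infinity>"
    using finite_cover_exists[OF assms(1,3,2)] by blast
  then show ?thesis using N_star_le[of \<mu> K T] by (meson le_less_trans)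
qed

lemma convex_part:
  fixes K T :: "'a::euclidean_space set"
  assumes K: "compact K" and Tc: "closed T" and Ti: "interior T \<noteq> {}"
    and \<mu>: "\<mu> \<in> optimal_measures K T" and \<nu>: "\<nu> \<in> optimal_measures K T" and t: "0 \<le> t" "t \<le> 1"
  shows "convex_comb_measure t \<mu> \<nu> \<in> optimal_measures K T"
proof -
  define M where "M = convex_comb_measure t \<mu> \<nu>"
  have fin: "N_star K T < \<infinity>" by (rule N_star_finite[OF K Tc Ti])
  have s: "sets \<mu> = sets borel" "sets \<nu> = sets borel"
    using \<mu> \<nu> by (auto simp: optimal_measures_def regular_borel_measure_def)
  have sp: "space \<mu> = UNIV" "space \<nu> = UNIV"
    using sets_eq_imp_space_eq[OF s(1)] sets_eq_imp_space_eq[OF s(2)] by auto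
  have mass: "emeasure \<mu> UNIV = N_star K T" "emeasure \<nu> UNIV = N_star K T"
    using \<mu> \<nu> sp by (auto simp: optimal_measures_def)
  have sM: "sets M = sets borel" unfolding M_def by (rule cc_sets)
  have spM: "space M = UNIV" unfolding M_def by (rule cc_space)
  have massM: "emeasure M (space M) = N_star K T"
    unfolding spM unfolding M_def by (subst cc_emeasure[OF s]) (auto simp: mass ennreal_cc t)
  have regM: "regular_borel_measure M"
    by (rule REG[OF sM]) (use massM fin in auto)
  have covM: "covers M K T"
    unfolding covers_def
  proof
    fix x
    have ci: "conv_ind M T x = ennreal t * conv_ind \<mu> T x + ennreal (1 - t) * conv_ind \<nu> T x"
      unfolding conv_ind_def M_def by (rule cc_nn_integral[OF s ind_meas[OF Tc]])
    have "indicator K x \<le> conv_ind \<mu> T x" "indicator K x \<le> conv_ind \<nu> T x"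
      using \<mu> \<nu> by (auto simp: optimal_measures_def covers_def)
    then have "ennreal t * indicator K x + ennreal (1 - t) * indicator K x \<le> conv_ind M T x"
      unfolding ci by (intro add_mono mult_left_mono) auto
    then show "indicator K x \<le> conv_ind M T x" by (simp add: ennreal_cc t)
  qed
  show ?thesis using regM covM massM unfolding optimal_measures_def M_def by auto
qed




lemma restrict_cover:
  fixes \<mu> :: "'a::euclidean_space measure"
  assumes reg: "regular_borel_measure \<mu>" and cov: "covers \<mu> K T" and Tc: "closed T"
    and L: "closed L" and sub: "\<And>x y. x \<in> K \<Longrightarrow> x - y \<in> T \<Longrightarrow> y \<in> L"
    and fin: "emeasure \<mu> (space \<mu>) < \<infinity>"
  shows "N_star K T \<le> emeasure \<mu> L"
proof -
  have s: "sets \<mu> = sets borel" using reg by (simp add: regular_borel_measure_def)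
  have sp: "space \<mu> = UNIV" using sets_eq_imp_space_eq[OF s] by simp
  have Lm: "L \<in> sets \<mu>" using s L by (simp add: borel_closed)
  define \<nu> where "\<nu> = density \<mu> (indicator L)"
  have sn: "sets \<nu> = sets borel" using s by (simp add: \<nu>_def)
  have spn: "space \<nu> = UNIV" using sets_eq_imp_space_eq[OF sn] by simp
  have mn: "emeasure \<nu> (space \<nu>) = emeasure \<mu> L"
    unfolding \<nu>_def spn by (subst emeasure_restricted[OF Lm]) (auto simp: s sp)
  have "emeasure \<mu> L \<le> emeasure \<mu> (space \<mu>)" by (rule emeasure_space)
  then have "emeasure \<nu> (space \<nu>) \<noteq> \<infinity>" using fin mn by auto
  then have rn: "regular_borel_measure \<nu>" by (rule REG[OF sn])
  have cn: "covers \<nu> K T" unfolding covers_def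
  proof
    fix x show "indicator K x \<le> conv_ind \<nu> T x"
    proof (cases "x \<in> K")
      case False then show ?thesis by simp
    next
      case True
      have im: "(\<lambda>y. indicator T (x - y) :: ennreal) \<in> borel_measurable \<mu>"
        using ind_meas[OF Tc] s by (simp add: measurable_cong_sets[OF s refl])
      have "conv_ind \<nu> T x = (\<integral>\<^sup>+ y. indicator L y * indicator T (x - y) \<partial>\<mu>)"
        unfolding conv_ind_def \<nu>_def by (rule nn_integral_density) (use Lm im in auto)
      also have "\<dots> = conv_ind \<mu> T x" unfolding conv_ind_def
        by (intro nn_integral_cong) (use sub True in \<open>auto simp: indicator_def\<close>)
      finally show ?thesis using cov by (simp add: covers_def)
    qed
  qed
  show ?thesis using N_star_le[OF rn cn] mn by simp
qed

lemma exists_nonempty: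
  fixes K T :: "'a::euclidean_space set"
  assumes K: "compact K" and T: "compact T" and Ti: "interior T \<noteq> {}" and Kne: "K \<noteq> {}"
  shows "optimal_measures K T \<noteq> {}"
proof -
  have Tc: "closed T" using T by (rule compact_imp_closed)
  define N where "N = N_star K T"
  have N1: "1 \<le> N" unfolding N_def by (rule N_star_ge1[OF Kne])
  have Nfin: "N < \<infinity>" unfolding N_def by (rule N_star_finite[OF K Tc Ti])
  define n0 where "n0 = enn2real N"
  have Nn0: "N = ennreal n0" unfolding n0_def using Nfin by simp
  have n01: "1 \<le> n0" using N1 Nn0 ennreal_le_iff2[of 1 n0] by auto
  have "\<exists>\<mu>. regular_borel_measure \<mu> \<and> covers \<mu> K T \<and> emeasure \<mu> (space \<mu>) < ennreal (n0 + 1 / Suc k)" for k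
  proof -
    have "N < ennreal (n0 + 1 / Suc k)" unfolding Nn0 using n01 by (subst ennreal_less_iff) auto
    then show ?thesis unfolding N_def N_star_def INF_less_iff by auto
  qed
  then obtain \<mu>s where \<mu>s: "\<And>k. regular_borel_measure (\<mu>s k)" "\<And>k. covers (\<mu>s k) K T"
    "\<And>k. emeasure (\<mu>s k) (space (\<mu>s k)) < ennreal (n0 + 1 / Suc k)" by metis
  have s\<mu>: "sets (\<mu>s k) = sets borel" for k using \<mu>s(1) by (simp add: regular_borel_measure_def)
  have sp\<mu>: "space (\<mu>s k) = UNIV" for k using sets_eq_imp_space_eq[OF s\<mu>[of k]] by simp
  define L0 where "L0 = {x - y | x y. x \<in> K \<and> y \<in> T}"
  have L0c: "compact L0" unfolding L0_def by (rule compact_differences[OF K T])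
  have L0cl: "closed L0" using L0c by (rule compact_imp_closed)
  have subL: "\<And>x y. x \<in> K \<Longrightarrow> x - y \<in> T \<Longrightarrow> y \<in> L0" unfolding L0_def by force
  obtain B where B: "B > 0" "\<And>y. y \<in> L0 \<Longrightarrow> norm y \<le> B"
    using compact_imp_bounded[OF L0c] unfolding bounded_pos by auto
  define R where "R = B + 1"
  have R: "R > 0" using B by (simp add: R_def)
  have L0box: "L0 \<subseteq> boxR R"
  proof
    fix x assume x: "x \<in> L0"
    have "\<bar>x \<bullet> b\<bar> < B + 1" if "b \<in> Basis" for b
      using Basis_le_norm[OF that, of x] B(2)[OF x] by linarith
    then show "x \<in> boxR R" unfolding boxR_def R_def by auto
  qed
  obtain bs :: "'a list" where bs: "distinct bs" "set bs = Basis"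
    using finite_distinct_list[OF finite_Basis] by metis
  define r where "r k = enn2real (emeasure (\<mu>s k) L0)" for k
  have L0m: "L0 \<in> sets (\<mu>s k)" for k using s\<mu> L0cl by (simp add: borel_closed)
  have rfin: "emeasure (\<mu>s k) L0 = ennreal (r k)" and rub: "r k \<le> n0 + 1 / Suc k" and rlb: "n0 \<le> r k" for k
  proof -
    have a: "emeasure (\<mu>s k) L0 \<le> emeasure (\<mu>s k) (space (\<mu>s k))" by (rule emeasure_space)
    have b: "emeasure (\<mu>s k) L0 < ennreal (n0 + 1 / Suc k)" using a \<mu>s(3)[of k] by (rule le_less_trans)
    have "emeasure (\<mu>s k) L0 < \<top>" by (rule less_trans[OF b ennreal_less_top])
    then show rf: "emeasure (\<mu>s k) L0 = ennreal (r k)" unfolding r_def by (simp add: ennreal_enn2real)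
    have "0 \<le> r k" by (simp add: r_def)
    then show "r k \<le> n0 + 1 / Suc k" using b rf ennreal_less_iff[of "r k" "n0 + 1 / Suc k"] by auto
    have "N \<le> emeasure (\<mu>s k) L0" unfolding N_def
      by (rule restrict_cover[OF \<mu>s(1) \<mu>s(2) Tc L0cl subL]) (use \<mu>s(3)[of k] in \<open>auto simp: less_top[symmetric] dest: order.strict_trans\<close>)
    then show "n0 \<le> r k" using rf Nn0 n01 by (auto simp: ennreal_le_iff2)
  qed
  have rpos: "r k > 0" for k using rlb[of k] n01 by simp
  have rlim: "r \<longlonglongrightarrow> n0"
  proof (rule real_tendsto_sandwich[where f="\<lambda>_. n0" and h="\<lambda>k. n0 + 1 / Suc k"])
    show "\<forall>\<^sub>F k in sequentially. n0 \<le> r k" using rlb by simp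
    show "\<forall>\<^sub>F k in sequentially. r k \<le> n0 + 1 / Suc k" using rub by simp
    show "(\<lambda>_. n0) \<longlonglongrightarrow> n0" by simp
    show "(\<lambda>k. n0 + 1 / real (Suc k)) \<longlonglongrightarrow> n0"
      using tendsto_add[OF tendsto_const[of n0] LIMSEQ_inverse_real_of_nat] by (simp add: inverse_eq_divide)
  qed
  define c where "c = code bs R"
  have cm: "c \<in> measurable (\<mu>s k) borel" for k
    unfolding c_def using code_measurable measurable_cong_sets[OF s\<mu>[of k] refl] by blast
  define w where "w k y = ennreal (1 / r k) * indicator L0 y" for k y
  have wm: "w k \<in> borel_measurable (\<mu>s k)" for k
    unfolding w_def using L0m[of k] by measurable
  define P where "P k = distr (density (\<mu>s k) (w k)) borel c" for k
  have cm': "c \<in> measurable (density (\<mu>s k) (w k)) borel" for k using cm[of k] by simp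
  have emP: "emeasure (P k) A = (\<integral>\<^sup>+ y. w k y * indicator (c -` A) y \<partial>\<mu>s k)" if A: "A \<in> sets borel" for k A
  proof -
    have "emeasure (P k) A = emeasure (density (\<mu>s k) (w k)) (c -` A \<inter> space (density (\<mu>s k) (w k)))"
      unfolding P_def by (rule emeasure_distr[OF cm' A])
    also have "\<dots> = emeasure (density (\<mu>s k) (w k)) (c -` A)" by (simp add: sp\<mu>)
    also have "\<dots> = (\<integral>\<^sup>+ y. w k y * indicator (c -` A) y \<partial>\<mu>s k)"
      by (rule emeasure_density[OF wm]) (use measurable_sets[OF cm[of k] A] sp\<mu> in simp)
    finally show ?thesis .
  qed
  have Puniv: "emeasure (P k) UNIV = 1" for k
  proof -
    have "emeasure (P k) UNIV = (\<integral>\<^sup>+ y. ennreal (1 / r k) * indicator L0 y \<partial>\<mu>s k)"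
      by (simp add: emP w_def)
    also have "\<dots> = ennreal (1 / r k) * emeasure (\<mu>s k) L0"
      by (subst nn_integral_cmult) (auto intro!: borel_measurable_indicator L0m simp: nn_integral_indicator[OF L0m])
    also have "\<dots> = 1" using rpos[of k] by (simp add: rfin ennreal_mult[symmetric])
    finally show ?thesis .
  qed
  have sP: "sets (P k) = sets borel" for k by (simp add: P_def)
  have spP: "space (P k) = UNIV" for k by (simp add: P_def)
  have rdP: "real_distribution (P k)" for k
    unfolding real_distribution_def real_distribution_axioms_def prob_space_def prob_space_axioms_def
    using sP Puniv spP by (auto intro!: finite_measureI)
  have cb: "0 \<le> c y" "c y \<le> 1" for y unfolding c_def by (rule code_bounds)+
  have tP: "tight P" unfolding tight_def
  proof (intro conjI allI impI rdP)
    fix \<epsilon> :: real assume "\<epsilon> > 0"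
    have "c y \<in> {-1<..2}" for y using cb[of y] by auto
    then have "c -` {-1<..2} = UNIV" by auto
    then have "emeasure (P n) {-1<..2} = emeasure (P n) UNIV" for n by (simp add: emP)
    then have "measure (P n) {-1<..2} = 1" for n by (simp add: measure_def Puniv)
    then show "\<exists>a b. a < b \<and> (\<forall>n. 1 - \<epsilon> < measure (P n) {a<..b})"
      using \<open>\<epsilon> > 0\<close> by (intro exI[of _ "-1"] exI[of _ 2]) auto
  qed
  obtain sub \<rho> where sub: "strict_mono sub" and rd\<rho>: "real_distribution \<rho>"
    and wc: "weak_conv_m (P \<circ> id \<circ> sub) \<rho>"
    using tight_imp_convergent_subsubsequence[OF tP strict_mono_id] by blast
  have rdPs: "real_distribution ((P \<circ> id \<circ> sub) k)" for k by (simp add: rdP)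
  define S where "S = c ` L0"
  have uc: "uniformly_continuous_on S (inv_into L0 c)"
    unfolding S_def c_def by (rule code_uc[OF bs R L0box])
  obtain g0 where g0: "uniformly_continuous_on (closure S) g0" "\<And>z. z \<in> S \<Longrightarrow> inv_into L0 c z = g0 z"
    using uniformly_continuous_on_extension_on_closure[OF uc] by metis
  have injc: "inj_on c L0" unfolding c_def using code_inj[OF bs R] L0box by (rule inj_on_subset)
  have g0c: "g0 (c y) = y" if "y \<in> L0" for y
    using g0(2)[of "c y"] that injc by (auto simp: S_def)
  have contg0: "continuous_on (closure S) g0" using g0(1) by (rule uniformly_continuous_imp_continuous)
  define g where "g z = (if z \<in> closure S then g0 z else 0)" for z
  have gm: "g \<in> borel_measurable borel"
    unfolding g_def by (rule borel_measurable_continuous_on_if) (auto intro: borel_closed contg0 continuous_on_const)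
  interpret \<rho>: real_distribution \<rho> by (rule rd\<rho>)
  have Tm[measurable]: "T \<in> sets borel" using Tc by (rule borel_closed)
  have Sm[measurable]: "closure S \<in> sets borel" by (rule borel_closed) simp
  have gm'[measurable]: "g \<in> borel_measurable borel" by (rule gm)
  have key: "ennreal (1 / n0) \<le> emeasure \<rho> {z. z \<in> closure S \<and> x - g z \<in> T}" if x: "x \<in> K" for x
  proof -
    define A where "A = {y. x - y \<in> T}"
    have AL: "A \<subseteq> L0" using subL x by (auto simp: A_def)
    define F where "F = closure (c ` A)"
    have Fc: "closed F" by (simp add: F_def)
    have FS: "F \<subseteq> closure S" unfolding F_def S_def using AL by (intro closure_mono image_mono)
    have "A = (\<lambda>y. x - y) -` T" by (auto simp: A_def)
    then have Acl: "closed A"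
      using Tc by (auto intro!: continuous_closed_vimage continuous_intros)
    have "g0 ` F \<subseteq> A" unfolding F_def
    proof (rule image_closure_subset)
      show "continuous_on (closure (c ` A)) g0"
        by (rule continuous_on_subset[OF contg0]) (use FS in \<open>simp add: F_def\<close>)
      show "closed A" by (rule Acl)
      show "g0 ` c ` A \<subseteq> A" using AL g0c by auto
    qed
    then have Fsub: "F \<subseteq> {z. z \<in> closure S \<and> x - g z \<in> T}" using FS by (auto simp: g_def A_def)
    have Pk: "1 / r k \<le> measure (P k) F" for k
    proof -
      have Fb: "F \<in> sets borel" using Fc by (rule borel_closed)
      have c1: "1 \<le> conv_ind (\<mu>s k) T x"
        using \<mu>s(2)[of k] x unfolding covers_def by (metis indicator_simps(1))
      have "ennreal (1 / r k) = ennreal (1 / r k) * 1" by simp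
      also have "\<dots> \<le> ennreal (1 / r k) * conv_ind (\<mu>s k) T x"
        by (rule mult_left_mono[OF c1]) simp
      also have "\<dots> = (\<integral>\<^sup>+ y. ennreal (1 / r k) * indicator T (x - y) \<partial>\<mu>s k)"
        unfolding conv_ind_def
        by (rule nn_integral_cmult[symmetric]) (use ind_meas[OF Tc] in \<open>simp add: measurable_cong_sets[OF s\<mu>[of k] refl]\<close>)
      also have "\<dots> \<le> (\<integral>\<^sup>+ y. w k y * indicator (c -` F) y \<partial>\<mu>s k)"
      proof (rule nn_integral_mono)
        fix y assume "y \<in> space (\<mu>s k)"
        show "ennreal (1 / r k) * indicator T (x - y) \<le> w k y * indicator (c -` F) y"
        proof (cases "x - y \<in> T")
          case True
          then have "y \<in> A" by (simp add: A_def)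
          then have "y \<in> L0" "c y \<in> F" using AL closure_subset[of "c ` A"] by (auto simp: F_def)
          then show ?thesis using True by (simp add: w_def)
        qed simp
      qed
      also have "\<dots> = emeasure (P k) F" by (rule emP[symmetric, OF Fb])
      finally have e: "ennreal (1 / r k) \<le> emeasure (P k) F" .
      interpret Pk: real_distribution "P k" by (rule rdP)
      show ?thesis using e rpos[of k] by (simp add: Pk.emeasure_eq_measure)
    qed
    have lim: "(\<lambda>k. 1 / r (sub k)) \<longlonglongrightarrow> 1 / n0"
    proof -
      have "(r \<circ> sub) \<longlonglongrightarrow> n0" by (rule LIMSEQ_subseq_LIMSEQ[OF rlim sub])
      then show ?thesis using n01 by (intro tendsto_divide tendsto_const) (auto simp: o_def)
    qed
    have "1 / n0 \<le> measure \<rho> F"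
      by (rule closed_limit[OF rdPs rd\<rho> wc Fc lim]) (simp add: Pk)
    then have "ennreal (1 / n0) \<le> emeasure \<rho> F" by (simp add: \<rho>.emeasure_eq_measure)
    also have "\<dots> \<le> emeasure \<rho> {z. z \<in> closure S \<and> x - g z \<in> T}"
      by (rule emeasure_mono[OF Fsub]) measurable
    finally show ?thesis .
  qed
  define D where "D = density \<rho> (\<lambda>_. ennreal n0)"
  define \<mu>f where "\<mu>f = distr D borel g"
  have sD: "sets D = sets borel" by (simp add: D_def)
  have spD: "space D = UNIV" by (simp add: D_def)
  have gmD: "g \<in> measurable D borel" using gm measurable_cong_sets[OF sD refl] by blast
  have sf: "sets \<mu>f = sets borel" by (simp add: \<mu>f_def)
  have spf: "space \<mu>f = UNIV" by (simp add: \<mu>f_def)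
  have massf: "emeasure \<mu>f (space \<mu>f) = N"
  proof -
    have "emeasure \<mu>f (space \<mu>f) = emeasure D UNIV"
      unfolding \<mu>f_def by (subst emeasure_distr[OF gmD]) (auto simp: spD)
    also have "\<dots> = (\<integral>\<^sup>+ z. ennreal n0 * indicator UNIV z \<partial>\<rho>)"
      unfolding D_def by (rule emeasure_density) auto
    also have "\<dots> = ennreal n0 * emeasure \<rho> UNIV"
      by (subst nn_integral_cmult_indicator) auto
    also have "\<dots> = N" using \<rho>.emeasure_space_1 by (simp add: Nn0)
    finally show ?thesis .
  qed
  have regf: "regular_borel_measure \<mu>f" by (rule REG[OF sf]) (use massf Nfin in auto)
  have covf: "covers \<mu>f K T" unfolding covers_def
  proof
    fix x show "indicator K x \<le> conv_ind \<mu>f T x"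
    proof (cases "x \<in> K")
      case False then show ?thesis by simp
    next
      case True
      define Q where "Q = {z. z \<in> closure S \<and> x - g z \<in> T}"
      have Qm: "Q \<in> sets borel" unfolding Q_def by measurable
      have "conv_ind \<mu>f T x = (\<integral>\<^sup>+ z. indicator T (x - g z) \<partial>D)"
        unfolding conv_ind_def \<mu>f_def
        by (rule nn_integral_distr[OF gmD]) (use ind_meas[OF Tc] in simp)
      also have "\<dots> = (\<integral>\<^sup>+ z. ennreal n0 * indicator T (x - g z) \<partial>\<rho>)"
        unfolding D_def by (rule nn_integral_density) auto
      also have "\<dots> \<ge> (\<integral>\<^sup>+ z. ennreal n0 * indicator Q z \<partial>\<rho>)"
        by (rule nn_integral_mono) (auto simp: Q_def indicator_def)
      moreover have "(\<integral>\<^sup>+ z. ennreal n0 * indicator Q z \<partial>\<rho>) = ennreal n0 * emeasure \<rho> Q"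
        by (rule nn_integral_cmult_indicator) (simp add: Qm)
      moreover have "ennreal n0 * emeasure \<rho> Q \<ge> ennreal n0 * ennreal (1 / n0)"
        by (rule mult_left_mono) (use key[OF True] in \<open>auto simp: Q_def\<close>)
      moreover have "ennreal n0 * ennreal (1 / n0) = 1" using n01 by (simp add: ennreal_mult[symmetric])
      ultimately show ?thesis using True by (metis indicator_simps(1) order_trans)
    qed
  qed
  have "\<mu>f \<in> optimal_measures K T"
    unfolding optimal_measures_def using regf covf massf by (simp add: N_def)
  then show ?thesis by blast
qed


lemma exists_part:
  fixes K T :: "'a::euclidean_space set"
  assumes K: "compact K" and T: "compact T" and Ti: "interior T \<noteq> {}"
  shows "optimal_measures K T \<noteq> {}"
proof (cases "K = {}")
  case False then show ?thesis using exists_nonempty[OF K T Ti] by blast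
next
  case True
  define \<mu> where "\<mu> = null_measure (borel :: 'a measure)"
  have s: "sets \<mu> = sets borel" by (simp add: \<mu>_def)
  have m: "emeasure \<mu> (space \<mu>) = 0" by (simp add: \<mu>_def)
  have reg: "regular_borel_measure \<mu>" by (rule REG[OF s]) (simp add: m)
  have cov: "covers \<mu> K T" using True by (simp add: covers_def)
  have "N_star K T \<le> 0" using N_star_le[OF reg cov] m by simp
  then have "\<mu> \<in> optimal_measures K T" using reg cov m by (simp add: optimal_measures_def)
  then show ?thesis by blast
qed

theorem proposition2p6:
  fixes K T :: "'a::euclidean_space set"
  assumes "compact K" and "compact T" and "interior T \<noteq> {}"
  shows "optimal_measures K T \<noteq> {} \<and>
    (\<forall>\<mu> \<in> optimal_measures K T. \<forall>\<nu> \<in> optimal_measures K T. \<forall>t::real. 0 \<le> t \<and> t \<le> 1 \<longrightarrow>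
       convex_comb_measure t \<mu> \<nu> \<in> optimal_measures K T)"
  using exists_part[OF assms] convex_part[OF assms(1) compact_imp_closed[OF assms(2)] assms(3)] by blast



end
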